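(* Let $d\ge2$ be even, $\mathcal I_d=\{-\tfrac d2,\ldots,\tfrac d2-1\}$, $\mathcal H_d$ with orthonormal basis $\{|j\rangle\}_{j\in\mathcal I_d}$, $|ij\rangle=|i\rangle\otimes|j\rangle$, $\omega^x=e^{2\pi ix/d}$ for real $x$, $\hat Q=\sum_j j|j\rangle\langle j|$, $\widetilde{|k\rangle}=d^{-1/2}\sum_j\omega^{kj}|j\rangle$, $\hat P=\sum_k k\widetilde{|k\rangle}\widetilde{\langle k|}$, $V_{\alpha\beta}=\omega^{\alpha\hat Q+\beta\hat Q^2}$, $\tilde V_{\alpha\beta}=\omega^{\alpha\hat P+\beta\hat P^2}$. Define $G(X)=\mathbb E_{\alpha\beta}V_{\alpha\beta}^{\otimes2}X(V_{\alpha\beta}^\dagger)^{\otimes2}$ and $\tilde G(X)=\mathbb E_{\alpha\beta}\tilde V_{\alpha\beta}^{\otimes2}X(\tilde V_{\alpha\beta}^\dagger)^{\otimes2}$ with $\alpha,\beta$ independent uniform on $[0,d)$, and $\mathcal R=G\circ\tilde G\circ G$. Let $I=\sum_{ab}|ab\rangle\langle ab|$, $F=\sum_{ab}|ab\rangle\langle ba|$, $E=\sum_i|ii\rangle\langle ii|$. Let $i\in\mathcal I_d$ and $u\in\mathcal I_d\setminus\{0\}$, where additions such as $i+u$, $a+u$ are taken modulo $d$ with values in $\mathcal I_d$. Then for $i,j,i',j'\in\mathcal I_d$ with $\{i',j'\}\ne\{i,j\}$, $\mathcal R(|ij\rangle\langle i'j'|)=0$, and $\mathcal R(|i,i+u\rangle\langle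 i,i+u|)=\frac1{d^2}\sum_a|a,a+u\rangle\langle a,a+u|+\frac I{d^2}-\frac{I+F-E}{d^3}$, $\mathcal R(|i,i+u\rangle\langle i+u,i|)=\frac1{d^2}\sum_a|a,a+u\rangle\langle a+u,a|+\frac F{d^2}-\frac{I+F-E}{d^3}$, $\mathcal R(|ii\rangle\langle ii|)=\frac{I+F}{d^2}-\frac{I+F-E}{d^3}$, with sums over $a\in\mathcal I_d$. *)

theory Defs
  imports "HOL-Analysis.Analysis"
begin

(* Single-qudit operators on H_d: matrices indexed by I_d (entries outside I_d are irrelevant).
   Two-qudit operators on H_d (x) H_d: matrices indexed by pairs (a,b) in I_d x I_d,
   the pair (a,b) standing for the basis vector |ab> = |a> (x) |b>. *)
type_synonym op1 = "int \<Rightarrow> int \<Rightarrow> complex"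
type_synonym op2 = "int \<times> int \<Rightarrow> int \<times> int \<Rightarrow> complex"

definition Idx :: "nat \<Rightarrow> int set" where
  "Idx d = {- (int d div 2) ..< int d div 2}"

definition addm :: "nat \<Rightarrow> int \<Rightarrow> int \<Rightarrow> int" where
  "addm d a u = ((a + u + int d div 2) mod int d) - int d div 2"

definition omega :: "nat \<Rightarrow> real \<Rightarrow> complex" where
  "omega d x = cis (2 * pi * x / real d)"

definition ket :: "int \<Rightarrow> int \<Rightarrow> complex" where
  "ket k j = (if j = k then 1 else 0)"

definition kett :: "nat \<Rightarrow> int \<Rightarrow> int \<Rightarrow> complex" where
  "kett d k j = omega d (real_of_int (k * j)) / complex_of_real (sqrt (real d))"

(* spectral calculus: given an orthonormal eigenbasis e_k (k in I_d) and values f k,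
   the operator sum_k f k |e_k><e_k| *)
definition spec_op :: "nat \<Rightarrow> (int \<Rightarrow> int \<Rightarrow> complex) \<Rightarrow> (int \<Rightarrow> complex) \<Rightarrow> op1" where
  "spec_op d e f j j' = (\<Sum>k\<in>Idx d. f k * e k j * cnj (e k j'))"

definition Vop :: "nat \<Rightarrow> real \<Rightarrow> real \<Rightarrow> op1" where
  "Vop d \<alpha> \<beta> = spec_op d ket (\<lambda>k. omega d (\<alpha> * real_of_int k + \<beta> * (real_of_int k)^2))"

definition Vtop :: "nat \<Rightarrow> real \<Rightarrow> real \<Rightarrow> op1" where
  "Vtop d \<alpha> \<beta> = spec_op d (kett d) (\<lambda>k. omega d (\<alpha> * real_of_int k + \<beta> * (real_of_int k)^2))"

definition conj2 :: "nat \<Rightarrow> op1 \<Rightarrow> op2 \<Rightarrow> op2" where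
  "conj2 d U X r s =
     (\<Sum>c\<in>Idx d. \<Sum>e\<in>Idx d. \<Sum>c'\<in>Idx d. \<Sum>e'\<in>Idx d.
        U (fst r) c * U (snd r) e * X (c, e) (c', e') * cnj (U (fst s) c') * cnj (U (snd s) e'))"

definition twirl :: "nat \<Rightarrow> (real \<Rightarrow> real \<Rightarrow> op1) \<Rightarrow> op2 \<Rightarrow> op2" where
  "twirl d W X r s =
     integral\<^sup>L (uniform_measure lborel ({0..<real d} \<times> {0..<real d}))
       (\<lambda>p. conj2 d (W (fst p) (snd p)) X r s)"

definition Gch :: "nat \<Rightarrow> op2 \<Rightarrow> op2" where
  "Gch d = twirl d (Vop d)"

definition Gtch :: "nat \<Rightarrow> op2 \<Rightarrow> op2" where
  "Gtch d = twirl d (Vtop d)"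

definition Rch :: "nat \<Rightarrow> op2 \<Rightarrow> op2" where
  "Rch d = Gch d \<circ> Gtch d \<circ> Gch d"

definition ketbra2 :: "int \<times> int \<Rightarrow> int \<times> int \<Rightarrow> op2" where
  "ketbra2 p q r s = (if r = p \<and> s = q then 1 else 0)"

definition Iop :: op2 where "Iop r s = (if r = s then 1 else 0)"
definition Fop :: op2 where "Fop r s = (if fst r = snd s \<and> snd r = fst s then 1 else 0)"
definition Eop :: op2 where
  "Eop r s = (if fst r = snd r \<and> r = s then 1 else 0)"

end

theory Submission
  imports Defs
begin


lemma omega_mult: "omega d x * omega d y = omega d (x + y)"
  by (simp add: omega_def cis_mult add_divide_distrib distrib_left)

lemma omega_cnj: "cnj (omega d x) = omega d (- x)"
  by (simp add: omega_def cis_cnj)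

lemma omega_0[simp]: "omega d 0 = 1" by (simp add: omega_def)

lemma omega_exp: "omega d x = exp (\<i> * complex_of_real (2*pi/real d) * complex_of_real x)"
  by (simp add: omega_def cis_conv_exp mult_ac)

lemma int1:
  assumes "d > 0"
  shows "(LBINT x:{0..<real d}. omega d (x * real_of_int n)) = (if n = 0 then complex_of_real (real d) else 0)"
proof -
  define a where "a = \<i> * complex_of_real (2*pi/real d) * of_int n"
  have om: "omega d (x * real_of_int n) = exp (a * complex_of_real x)" for x
    by (simp add: omega_exp a_def mult_ac)
  have "(LBINT x:{0..<real d}. omega d (x * real_of_int n)) = (LBINT x=0..real d. exp (a * complex_of_real x))"
    using interval_integral_Ico[of 0 "real d" "\<lambda>x. exp (a * complex_of_real x)"] by (simp add: om zero_ereal_def)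
  also have "\<dots> = (if n = 0 then complex_of_real (real d) else 0)"
  proof (cases "n = 0")
    case True
    have "(LBINT x=ereal 0..ereal (real d). (1::complex)) = complex_of_real (real d) - complex_of_real 0"
    proof (rule interval_integral_FTC_finite)
      fix t :: real
      show "(complex_of_real has_vector_derivative 1) (at t within {min 0 (real d)..max 0 (real d)})"
        by (auto intro!: derivative_eq_intros simp: has_vector_derivative_def scaleR_conv_of_real)
    qed auto
    then show ?thesis using True by (simp add: a_def zero_ereal_def)
  next
    case False
    then have an: "a \<noteq> 0" using assms by (simp add: a_def)
    have "(LBINT x=ereal 0..ereal (real d). exp (a * complex_of_real x)) = exp (a * of_real (real d)) / a - exp (a * of_real 0) / a"
    proof (rule interval_integral_FTC_finite)
      show "continuous_on {min 0 (real d)..max 0 (real d)} (\<lambda>x. exp (a * complex_of_real x))"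
        by (intro continuous_intros)
      fix t :: real
      show "((\<lambda>x. exp (a * x) / a) has_vector_derivative exp (a * t)) (at t within {min 0 (real d)..max 0 (real d)})"
        using an
        by (intro derivative_eq_intros has_complex_derivative_imp_has_vector_derivative [unfolded o_def] | simp)+
    qed
    also have "exp (a * of_real (real d)) = 1"
    proof -
      have "a * of_real (real d) = 2 * pi * of_int n * \<i>" using assms by (simp add: a_def field_simps)
      then show ?thesis by (simp add: exp_eq_1)
    qed
    finally show ?thesis using False by (simp add: zero_ereal_def)
  qed
  finally show ?thesis .
qed

lemma omega_cont[continuous_intros]: "continuous_on A (omega d)"
  unfolding omega_def divide_inverse by (intro continuous_intros)

lemma omega_meas[measurable]: "omega d \<in> borel_measurable borel"
  by (intro borel_measurable_continuous_onI omega_cont)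

lemma norm_omega[simp]: "norm (omega d x) = 1"
  by (simp add: omega_def)

definition SQ :: "nat \<Rightarrow> (real \<times> real) set" where
  "SQ d = {0..<real d} \<times> {0..<real d}"

lemma SQ_lborel: "lborel = (lborel \<Otimes>\<^sub>M lborel :: (real \<times> real) measure)"
  by (simp add: lborel_prod)

lemma SQ_sets[measurable]: "SQ d \<in> sets (lborel \<Otimes>\<^sub>M lborel)"
  unfolding SQ_def by measurable

lemma SQ_emeasure: "emeasure (lborel \<Otimes>\<^sub>M lborel) (SQ d) = ennreal (real d * real d)"
  unfolding SQ_def
  by (subst lborel.emeasure_pair_measure_Times) (auto simp: ennreal_mult)

lemma unif_fin:
  assumes "d > 0"
  shows "finite_measure (uniform_measure lborel (SQ d))"
proof
  have "emeasure (uniform_measure (lborel \<Otimes>\<^sub>M lborel) (SQ d)) (space (uniform_measure (lborel \<Otimes>\<^sub>M lborel) (SQ d))) = 1"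
  proof -
    have "SQ d \<inter> space (lborel \<Otimes>\<^sub>M lborel) = SQ d" by (simp add: space_pair_measure)
    then show ?thesis using assms
      using SQ_sets[of d] sets.top[of "borel \<Otimes>\<^sub>M borel :: (real\<times>real) measure"] by (subst emeasure_uniform_measure) (simp_all add: SQ_emeasure divide_ennreal space_pair_measure)
  qed
  then show "emeasure (uniform_measure lborel (SQ d)) (space (uniform_measure lborel (SQ d))) \<noteq> \<infinity>"
    by (simp add: SQ_lborel[symmetric])
qed

lemma integrable_omega2:
  assumes "d > 0"
  shows "integrable (uniform_measure lborel (SQ d)) (\<lambda>p. omega d (fst p * a + snd p * b))"
proof -
  interpret finite_measure "uniform_measure lborel (SQ d)" by (rule unif_fin[OF assms])
  show ?thesis
    by (rule integrable_const_bound[where B=1]) (auto simp: SQ_lborel)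
qed

lemma int2:
  assumes "d > 0"
  shows "integral\<^sup>L (uniform_measure lborel (SQ d)) (\<lambda>p. omega d (fst p * real_of_int n + snd p * real_of_int m))
     = (if n = 0 \<and> m = 0 then 1 else 0)"
proof -
  define L where "L = (lborel \<Otimes>\<^sub>M lborel :: (real \<times> real) measure)"
  define g where "g = (\<lambda>p::real\<times>real. omega d (fst p * real_of_int n + snd p * real_of_int m))"
  define w where "w = (\<lambda>x. indicator (SQ d) x / (real d * real d))"
  define A where "A = {0..<real d}"
  define h1 where "h1 = (\<lambda>a. indicator A a *\<^sub>R omega d (a * real_of_int n))"
  define h2 where "h2 = (\<lambda>a. indicator A a *\<^sub>R omega d (a * real_of_int m))"
  have gm[measurable]: "g \<in> borel_measurable L" unfolding g_def L_def by measurable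
  have wm[measurable]: "w \<in> borel_measurable L" unfolding w_def L_def by measurable
  have wnn: "AE x in L. 0 \<le> w x" by (simp add: w_def)
  have dens: "uniform_measure L (SQ d) = density L w"
    unfolding uniform_measure_def L_def SQ_emeasure w_def
    using assms by (intro density_cong) (auto simp: divide_ennreal ennreal_indicator[symmetric] ennreal_mult[symmetric])
  have ptw: "w x *\<^sub>R g x = complex_of_real (1 / (real d * real d)) * (h1 (fst x) * h2 (snd x))" for x
    by (cases x) (auto simp: w_def g_def h1_def h2_def SQ_def A_def indicator_def omega_mult[symmetric] scaleR_conv_of_real algebra_simps)
  have "integrable (uniform_measure L (SQ d)) g"
    using integrable_omega2[OF assms] by (simp add: L_def SQ_lborel[symmetric] g_def)
  then have "integrable L (\<lambda>x. w x *\<^sub>R g x)"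
    unfolding dens by (subst (asm) integrable_density[OF gm wm wnn])
  then have "integrable L (\<lambda>x. complex_of_real (real d * real d) * (w x *\<^sub>R g x))"
    by (rule integrable_mult_right)
  moreover have "(\<lambda>x. complex_of_real (real d * real d) * (w x *\<^sub>R g x)) = (\<lambda>(a, b). h1 a * h2 b)"
    using assms by (auto simp: ptw)
  ultimately have int: "integrable L (\<lambda>(a, b). h1 a * h2 b)" by simp
  have "integral\<^sup>L (uniform_measure lborel (SQ d)) g = integral\<^sup>L (density L w) g"
    unfolding L_def lborel_prod using dens[unfolded L_def lborel_prod] by simp
  also have "\<dots> = integral\<^sup>L L (\<lambda>x. w x *\<^sub>R g x)"
    by (rule integral_density[OF gm wm wnn])
  also have "\<dots> = complex_of_real (1 / (real d * real d)) * integral\<^sup>L L (\<lambda>(a, b). h1 a * h2 b)"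
    by (simp add: ptw case_prod_beta')
  also have "integral\<^sup>L L (\<lambda>(a, b). h1 a * h2 b) = (\<integral>a. (\<integral>b. h1 a * h2 b \<partial>lborel) \<partial>lborel)"
    using lborel_pair.integral_fst[of "\<lambda>a b. h1 a * h2 b"] int by (simp add: L_def)
  also have "\<dots> = integral\<^sup>L lborel h1 * integral\<^sup>L lborel h2"
    by simp
  also have "integral\<^sup>L lborel h1 = (if n = 0 then complex_of_real (real d) else 0)"
    using int1[OF assms, of n] by (simp add: h1_def A_def set_lebesgue_integral_def)
  also have "integral\<^sup>L lborel h2 = (if m = 0 then complex_of_real (real d) else 0)"
    using int1[OF assms, of m] by (simp add: h2_def A_def set_lebesgue_integral_def)
  finally show ?thesis using assms by (simp add: g_def)
qed




definition fV :: "nat \<Rightarrow> real \<Rightarrow> real \<Rightarrow> int \<Rightarrow> complex" where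
  "fV d a b k = omega d (a * real_of_int k + b * (real_of_int k)^2)"

definition eqp :: "int \<times> int \<Rightarrow> int \<times> int \<Rightarrow> bool" where
  "eqp r s \<longleftrightarrow> (fst s = fst r \<and> snd s = snd r) \<or> (fst s = snd r \<and> snd s = fst r)"

lemma finite_Idx[simp]: "finite (Idx d)" by (simp add: Idx_def)

lemma Vop_eq: "Vop d a b j c = (if j \<in> Idx d \<and> c = j then fV d a b j else 0)"
proof -
  have "Vop d a b j c = (\<Sum>k\<in>Idx d. if k = j then (if c = j then fV d a b j else 0) else 0)"
    unfolding Vop_def spec_op_def ket_def fV_def by (intro sum.cong) auto
  then show ?thesis by simp
qed

lemma conj2_Vop:
  assumes "r \<in> Idx d \<times> Idx d" "s \<in> Idx d \<times> Idx d"
  shows "conj2 d (Vop d a b) X r s = fV d a b (fst r) * fV d a b (snd r) * cnj (fV d a b (fst s)) * cnj (fV d a b (snd s)) * X r s"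
proof -
  let ?R = "fV d a b (fst r) * fV d a b (snd r) * cnj (fV d a b (fst s)) * cnj (fV d a b (snd s)) * X r s"
  have pw: "Vop d a b (fst r) c * Vop d a b (snd r) e * X (c, e) (c', e') * cnj (Vop d a b (fst s) c') * cnj (Vop d a b (snd s) e')
     = (if e' = snd s then if c' = fst s then if e = snd r then if c = fst r then ?R else 0 else 0 else 0 else 0)" for c e c' e'
    using assms by (cases r, cases s) (auto simp: Vop_eq)
  show ?thesis unfolding conj2_def pw using assms by (cases r, cases s) simp
qed

lemma fV4: "fV d a b k1 * fV d a b k2 * cnj (fV d a b k3) * cnj (fV d a b k4) =
   omega d (a * real_of_int (k1 + k2 - k3 - k4) + b * real_of_int (k1^2 + k2^2 - k3^2 - k4^2))"
  unfolding fV_def omega_cnj omega_mult by (simp add: algebra_simps)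

lemma eqp_iff:
  fixes k1 k2 k3 k4 :: int
  shows "(k1 + k2 - k3 - k4 = 0 \<and> k1^2 + k2^2 - k3^2 - k4^2 = 0) \<longleftrightarrow> eqp (k1, k2) (k3, k4)"
proof
  assume h: "k1 + k2 - k3 - k4 = 0 \<and> k1^2 + k2^2 - k3^2 - k4^2 = 0"
  then have k4: "k4 = k1 + k2 - k3" by simp
  have "2 * ((k3 - k1) * (k3 - k2)) = - (k1^2 + k2^2 - k3^2 - k4^2)"
    unfolding k4 by (simp add: power2_eq_square algebra_simps)
  then have "(k3 - k1) * (k3 - k2) = 0" using h by simp
  then show "eqp (k1, k2) (k3, k4)" unfolding eqp_def using k4 by auto
next
  assume "eqp (k1, k2) (k3, k4)"
  then show "k1 + k2 - k3 - k4 = 0 \<and> k1^2 + k2^2 - k3^2 - k4^2 = 0" unfolding eqp_def by auto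
qed

lemma Gch_eq:
  assumes "d > 0" "r \<in> Idx d \<times> Idx d" "s \<in> Idx d \<times> Idx d"
  shows "Gch d X r s = (if eqp r s then X r s else 0)"
proof -
  obtain r1 r2 s1 s2 where rs: "r = (r1, r2)" "s = (s1, s2)" by (cases r, cases s) auto
  define n where "n = r1 + r2 - s1 - s2"
  define m where "m = r1^2 + r2^2 - s1^2 - s2^2"
  have "Gch d X r s = integral\<^sup>L (uniform_measure lborel (SQ d)) (\<lambda>p. X r s * omega d (fst p * real_of_int n + snd p * real_of_int m))"
  proof -
    have e: "conj2 d (Vop d x y) X r s = X r s * omega d (x * real_of_int n + y * real_of_int m)" for x y
    proof -
      have "conj2 d (Vop d x y) X r s = X r s * (fV d x y r1 * fV d x y r2 * cnj (fV d x y s1) * cnj (fV d x y s2))"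
        using conj2_Vop[OF assms(2,3)] by (simp add: rs mult_ac)
      then show ?thesis by (simp only: fV4 n_def m_def)
    qed
    show ?thesis unfolding Gch_def twirl_def SQ_def[symmetric] e ..
  qed
  also have "\<dots> = X r s * (if n = 0 \<and> m = 0 then 1 else 0)"
    by (simp add: int2[OF assms(1)])
  also have "(n = 0 \<and> m = 0) = eqp r s"
    unfolding n_def m_def rs by (rule eqp_iff)
  finally show ?thesis by simp
qed

lemma conj2_ketbra:
  assumes "p \<in> Idx d \<times> Idx d" "q \<in> Idx d \<times> Idx d"
  shows "conj2 d U (ketbra2 p q) r s = U (fst r) (fst p) * U (snd r) (snd p) * cnj (U (fst s) (fst q)) * cnj (U (snd s) (snd q))"
proof -
  let ?R = "U (fst r) (fst p) * U (snd r) (snd p) * cnj (U (fst s) (fst q)) * cnj (U (snd s) (snd q))"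
  have pw: "U (fst r) c * U (snd r) e * ketbra2 p q (c, e) (c', e') * cnj (U (fst s) c') * cnj (U (snd s) e')
     = (if e' = snd q then if c' = fst q then if e = snd p then if c = fst p then ?R else 0 else 0 else 0 else 0)" for c e c' e'
    by (cases p, cases q) (auto simp: ketbra2_def)
  show ?thesis unfolding conj2_def pw using assms by (cases p, cases q) simp
qed

lemma kett_prod:
  "kett d k j * cnj (kett d k c) = omega d (real_of_int (k * (j - c))) / complex_of_real (real d)"
proof -
  have "complex_of_real (sqrt (real d)) * complex_of_real (sqrt (real d)) = complex_of_real (real d)"
    by (simp flip: of_real_mult)
  then show ?thesis
    unfolding kett_def
    by (simp add: omega_cnj omega_mult algebra_simps)
qed

lemma Vtop_eq: "Vtop d a b j c = (\<Sum>k\<in>Idx d. fV d a b k * omega d (real_of_int (k * (j - c))) / complex_of_real (real d))"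
  unfolding Vtop_def spec_op_def fV_def
  by (intro sum.cong refl) (simp add: mult.assoc kett_prod)

lemma sum4_prod:
  fixes A B C D :: "int \<Rightarrow> complex"
  shows "sum A I * sum B I * sum C I * sum D I = (\<Sum>k1\<in>I. \<Sum>k2\<in>I. \<Sum>k3\<in>I. \<Sum>k4\<in>I. A k1 * B k2 * C k3 * D k4)"
  by (simp only: sum_distrib_left[symmetric] sum_distrib_right[symmetric])

definition cf :: "nat \<Rightarrow> int \<Rightarrow> int \<Rightarrow> int \<Rightarrow> int \<Rightarrow> int \<Rightarrow> int \<Rightarrow> int \<Rightarrow> int \<Rightarrow> complex" where
  "cf d x1 x2 y1 y2 k1 k2 k3 k4 = omega d (real_of_int (k1*x1 + k2*x2 - k3*y1 - k4*y2)) / (of_nat d)^4"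

lemma Vt4_pw:
  "(fV d a b k1 * omega d (real_of_int (k1 * x1)) / complex_of_real (real d)) *
   (fV d a b k2 * omega d (real_of_int (k2 * x2)) / complex_of_real (real d)) *
   cnj (fV d a b k3 * omega d (real_of_int (k3 * y1)) / complex_of_real (real d)) *
   cnj (fV d a b k4 * omega d (real_of_int (k4 * y2)) / complex_of_real (real d))
   = cf d x1 x2 y1 y2 k1 k2 k3 k4 * omega d (a * real_of_int (k1+k2-k3-k4) + b * real_of_int (k1^2+k2^2-k3^2-k4^2))"
  (is "?L = ?R")
proof -
  have "?L = (fV d a b k1 * fV d a b k2 * cnj (fV d a b k3) * cnj (fV d a b k4)) *
     (omega d (real_of_int (k1 * x1)) * omega d (real_of_int (k2 * x2)) * cnj (omega d (real_of_int (k3 * y1))) * cnj (omega d (real_of_int (k4 * y2)))) / (of_nat d)^4"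
    by (simp add: field_simps power4_eq_xxxx)
  also have "\<dots> = ?R" unfolding fV4 cf_def omega_cnj times_divide_eq_left omega_mult by (simp add: algebra_simps)
  finally show ?thesis .
qed

lemma Vt4:
  "Vtop d a b r1 p1 * Vtop d a b r2 p2 * cnj (Vtop d a b s1 q1) * cnj (Vtop d a b s2 q2) =
   (\<Sum>k1\<in>Idx d. \<Sum>k2\<in>Idx d. \<Sum>k3\<in>Idx d. \<Sum>k4\<in>Idx d.
      cf d (r1-p1) (r2-p2) (s1-q1) (s2-q2) k1 k2 k3 k4 * omega d (a * real_of_int (k1+k2-k3-k4) + b * real_of_int (k1^2+k2^2-k3^2-k4^2)))"
  unfolding Vtop_eq cnj_sum sum4_prod Vt4_pw ..

lemma int_term:
  assumes "d > 0"
  shows "integrable (uniform_measure lborel (SQ d)) (\<lambda>z. c * omega d (fst z * real_of_int n + snd z * real_of_int m))"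
  by (intro integrable_mult_right integrable_omega2[OF assms])

lemma int_sum4:
  assumes "d > 0"
  shows "integral\<^sup>L (uniform_measure lborel (SQ d)) (\<lambda>z.
      \<Sum>k1\<in>I. \<Sum>k2\<in>I. \<Sum>k3\<in>I. \<Sum>k4\<in>I. c k1 k2 k3 k4 * omega d (fst z * real_of_int (N k1 k2 k3 k4) + snd z * real_of_int (M k1 k2 k3 k4)))
   = (\<Sum>k1\<in>I. \<Sum>k2\<in>I. \<Sum>k3\<in>I. \<Sum>k4\<in>I. c k1 k2 k3 k4 * integral\<^sup>L (uniform_measure lborel (SQ d)) (\<lambda>z. omega d (fst z * real_of_int (N k1 k2 k3 k4) + snd z * real_of_int (M k1 k2 k3 k4))))"
proof -
  have T: "integrable (uniform_measure lborel (SQ d)) (\<lambda>z. c k1 k2 k3 k4 * omega d (fst z * real_of_int (N k1 k2 k3 k4) + snd z * real_of_int (M k1 k2 k3 k4)))" for k1 k2 k3 k4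
    by (rule int_term[OF assms])
  show ?thesis
    by (simp add: integral_sum T integrable_sum del: of_int_add of_int_diff of_int_mult of_int_power)
qed

lemma Gtch_ketbra:
  assumes "d > 0" "p \<in> Idx d \<times> Idx d" "q \<in> Idx d \<times> Idx d"
  shows "Gtch d (ketbra2 p q) r s =
    (\<Sum>k1\<in>Idx d. \<Sum>k2\<in>Idx d. \<Sum>k3\<in>Idx d. \<Sum>k4\<in>Idx d.
      cf d (fst r - fst p) (snd r - snd p) (fst s - fst q) (snd s - snd q) k1 k2 k3 k4 * (if eqp (k1, k2) (k3, k4) then 1 else 0))"
proof -
  let ?c = "cf d (fst r - fst p) (snd r - snd p) (fst s - fst q) (snd s - snd q)"
  have "Gtch d (ketbra2 p q) r s = integral\<^sup>L (uniform_measure lborel (SQ d)) (\<lambda>z.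
      \<Sum>k1\<in>Idx d. \<Sum>k2\<in>Idx d. \<Sum>k3\<in>Idx d. \<Sum>k4\<in>Idx d.
      ?c k1 k2 k3 k4 * omega d (fst z * real_of_int (k1+k2-k3-k4) + snd z * real_of_int (k1^2+k2^2-k3^2-k4^2)))"
    unfolding Gtch_def twirl_def SQ_def[symmetric] conj2_ketbra[OF assms(2,3)] Vt4 ..
  also have "\<dots> = (\<Sum>k1\<in>Idx d. \<Sum>k2\<in>Idx d. \<Sum>k3\<in>Idx d. \<Sum>k4\<in>Idx d.
      ?c k1 k2 k3 k4 * integral\<^sup>L (uniform_measure lborel (SQ d)) (\<lambda>z. omega d (fst z * real_of_int (k1+k2-k3-k4) + snd z * real_of_int (k1^2+k2^2-k3^2-k4^2))))"
    by (rule int_sum4[OF assms(1)])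
  also have "\<dots> = (\<Sum>k1\<in>Idx d. \<Sum>k2\<in>Idx d. \<Sum>k3\<in>Idx d. \<Sum>k4\<in>Idx d.
      ?c k1 k2 k3 k4 * (if eqp (k1, k2) (k3, k4) then 1 else 0))"
    by (simp only: int2[OF assms(1)] eqp_iff)
  finally show ?thesis .
qed

lemma sum_eqp:
  fixes c :: "int \<Rightarrow> int \<Rightarrow> int \<Rightarrow> int \<Rightarrow> complex"
  assumes "finite S"
  shows "(\<Sum>k1\<in>S. \<Sum>k2\<in>S. \<Sum>k3\<in>S. \<Sum>k4\<in>S. c k1 k2 k3 k4 * (if eqp (k1, k2) (k3, k4) then 1 else 0))
    = (\<Sum>k1\<in>S. \<Sum>k2\<in>S. c k1 k2 k1 k2) + (\<Sum>k1\<in>S. \<Sum>k2\<in>S. c k1 k2 k2 k1) - (\<Sum>k\<in>S. c k k k k)"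
  (is "_ = ?R")
proof -
  have pw: "c k1 k2 k3 k4 * (if eqp (k1, k2) (k3, k4) then 1 else 0) =
     (if k4 = k2 then if k3 = k1 then c k1 k2 k1 k2 else 0 else 0) + (if k4 = k1 then if k3 = k2 then c k1 k2 k2 k1 else 0 else 0)
     - (if k4 = k1 then if k3 = k1 then (if k1 = k2 then c k1 k1 k1 k1 else 0) else 0 else 0)" for k1 k2 k3 k4
    by (auto simp: eqp_def)
  have inner: "(\<Sum>k3\<in>S. \<Sum>k4\<in>S. c k1 k2 k3 k4 * (if eqp (k1, k2) (k3, k4) then 1 else 0)) =
     c k1 k2 k1 k2 + c k1 k2 k2 k1 - (if k1 = k2 then c k1 k1 k1 k1 else 0)" if "k1 \<in> S" "k2 \<in> S" for k1 k2
    unfolding pw using that assms by (simp add: sum.distrib sum_subtractf)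
  have "(\<Sum>k1\<in>S. \<Sum>k2\<in>S. \<Sum>k3\<in>S. \<Sum>k4\<in>S. c k1 k2 k3 k4 * (if eqp (k1, k2) (k3, k4) then 1 else 0))
     = (\<Sum>k1\<in>S. \<Sum>k2\<in>S. c k1 k2 k1 k2 + c k1 k2 k2 k1 - (if k1 = k2 then c k1 k1 k1 k1 else 0))"
    by (intro sum.cong refl) (simp add: inner)
  also have "\<dots> = ?R"
    using assms by (simp add: sum.distrib sum_subtractf)
  finally show ?thesis .
qed

lemma Idx_image:
  assumes "even d"
  shows "Idx d = (\<lambda>j. int j - int d div 2) ` {0..<d}"
proof -
  have "Idx d = (\<lambda>x. x + (- (int d div 2))) ` {0..<int d div 2 - (- (int d div 2))}"
    unfolding Idx_def by (rule image_add_int_atLeastLessThan[symmetric])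
  also have "{0..<int d div 2 - (- (int d div 2))} = int ` {0..<d}"
    using assms by (auto simp: image_int_atLeastLessThan elim!: evenE)
  finally show ?thesis by (auto simp: image_image)
qed

lemma card_Idx:
  assumes "even d" shows "card (Idx d) = d"
proof -
  have "inj_on (\<lambda>j. int j - int d div 2) {0..<d}" by (auto simp: inj_on_def)
  then show ?thesis unfolding Idx_image[OF assms] by (simp add: card_image)
qed

lemma omega_pow: "omega d x ^ j = omega d (real j * x)"
  unfolding omega_def Complex.DeMoivre by (simp add: mult_ac)

lemma omega_int_1: "int d dvd n \<Longrightarrow> omega d (real_of_int n) = 1"
proof -
  assume "int d dvd n"
  then obtain t where t: "n = int d * t" by (auto elim: dvdE)
  show ?thesis
  proof (cases "d = 0")
    case True then show ?thesis by (simp add: omega_def)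
  next
    case False
    then have "2 * pi * real_of_int n / real d = 2 * pi * real_of_int t" by (simp add: t)
    then show ?thesis by (simp add: omega_def)
  qed
qed

lemma omega_1_int: "d > 0 \<Longrightarrow> omega d (real_of_int n) = 1 \<Longrightarrow> int d dvd n"
proof -
  assume d: "d > 0" and o: "omega d (real_of_int n) = 1"
  have "exp (\<i> * complex_of_real (2*pi/real d) * complex_of_real (real_of_int n)) = 1"
    using o by (simp add: omega_exp)
  then obtain m :: int where m: "2*pi/real d * real_of_int n = 2 * pi * real_of_int m"
    unfolding exp_eq_1 by (auto simp flip: of_real_mult)
  then have "real_of_int n = real d * real_of_int m" using d by (simp add: field_simps)
  then have "n = int d * m" by (metis of_int_eq_iff of_int_mult of_int_of_nat_eq)
  then show ?thesis by simp
qed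

lemma chs:
  assumes "even d" "d > 0"
  shows "(\<Sum>k\<in>Idx d. omega d (real_of_int (k * n))) = (if int d dvd n then of_nat d else 0)"
proof (cases "int d dvd n")
  case True
  then have "omega d (real_of_int (k * n)) = 1" for k
    by (intro omega_int_1) simp
  then show ?thesis using True card_Idx[OF assms(1)] by simp
next
  case False
  define h where "h = int d div 2"
  define w where "w = omega d (real_of_int n)"
  have w1: "w \<noteq> 1" using False omega_1_int[OF assms(2)] by (auto simp: w_def)
  have wd: "w ^ d = 1" unfolding w_def omega_pow
    by (rule omega_int_1[of d "int d * n", simplified])
  have inj: "inj_on (\<lambda>j. int j - h) {0..<d}" by (auto simp: inj_on_def)
  have "(\<Sum>k\<in>Idx d. omega d (real_of_int (k * n))) = (\<Sum>j\<in>{0..<d}. omega d (real_of_int ((int j - h) * n)))"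
    unfolding Idx_image[OF assms(1)] h_def[symmetric] by (simp add: sum.reindex[OF inj])
  also have "\<dots> = (\<Sum>j\<in>{0..<d}. omega d (real_of_int (- h * n)) * w ^ j)"
    by (intro sum.cong refl) (simp add: w_def omega_pow omega_mult algebra_simps)
  also have "\<dots> = omega d (real_of_int (- h * n)) * (\<Sum>j<d. w ^ j)"
    by (simp add: sum_distrib_left atLeast0LessThan)
  also have "(\<Sum>j<d. w ^ j) = 0" using w1 wd by (simp add: sum_gp_strict)
  finally show ?thesis using False by simp
qed

definition dl :: "nat \<Rightarrow> int \<Rightarrow> complex" where
  "dl d n = (if int d dvd n then 1 else 0)"

lemma chs': "even d \<Longrightarrow> d > 0 \<Longrightarrow> (\<Sum>k\<in>Idx d. omega d (real_of_int (k * n))) = of_nat d * dl d n"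
  using chs[of d n] by (simp add: dl_def)

lemma Gtch_val:
  fixes r s :: "int \<times> int"
  assumes "even d" "d > 0" "p \<in> Idx d \<times> Idx d" "q \<in> Idx d \<times> Idx d"
  defines "x1 \<equiv> fst r - fst p" and "x2 \<equiv> snd r - snd p" and "y1 \<equiv> fst s - fst q" and "y2 \<equiv> snd s - snd q"
  shows "Gtch d (ketbra2 p q) r s =
    (dl d (x1 - y1) * dl d (x2 - y2) + dl d (x1 - y2) * dl d (x2 - y1)) / (of_nat d)^2 - dl d (x1 + x2 - y1 - y2) / (of_nat d)^3"
proof -
  let ?c = "cf d x1 x2 y1 y2"
  let ?D = "(of_nat d :: complex)^4"
  have dz: "(of_nat d :: complex) \<noteq> 0" using assms(2) by simp
  have G: "Gtch d (ketbra2 p q) r s = (\<Sum>k1\<in>Idx d. \<Sum>k2\<in>Idx d. ?c k1 k2 k1 k2) + (\<Sum>k1\<in>Idx d. \<Sum>k2\<in>Idx d. ?c k1 k2 k2 k1) - (\<Sum>k\<in>Idx d. ?c k k k k)"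
    unfolding Gtch_ketbra[OF assms(2,3,4)] x1_def x2_def y1_def y2_def by (rule sum_eqp) simp
  have A: "(\<Sum>k1\<in>Idx d. \<Sum>k2\<in>Idx d. ?c k1 k2 k1 k2) = (of_nat d * dl d (x1 - y1)) * (of_nat d * dl d (x2 - y2)) / ?D"
  proof -
    have "?c k1 k2 k1 k2 = omega d (real_of_int (k1 * (x1 - y1))) * omega d (real_of_int (k2 * (x2 - y2))) / ?D" for k1 k2
      unfolding cf_def omega_mult by (simp add: algebra_simps)
    then have "(\<Sum>k1\<in>Idx d. \<Sum>k2\<in>Idx d. ?c k1 k2 k1 k2) = (\<Sum>k1\<in>Idx d. omega d (real_of_int (k1 * (x1 - y1)))) * (\<Sum>k2\<in>Idx d. omega d (real_of_int (k2 * (x2 - y2)))) / ?D"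
      by (simp add: sum_product sum_divide_distrib)
    then show ?thesis by (simp only: chs'[OF assms(1,2)])
  qed
  have B: "(\<Sum>k1\<in>Idx d. \<Sum>k2\<in>Idx d. ?c k1 k2 k2 k1) = (of_nat d * dl d (x1 - y2)) * (of_nat d * dl d (x2 - y1)) / ?D"
  proof -
    have "?c k1 k2 k2 k1 = omega d (real_of_int (k1 * (x1 - y2))) * omega d (real_of_int (k2 * (x2 - y1))) / ?D" for k1 k2
      unfolding cf_def omega_mult by (simp add: algebra_simps)
    then have "(\<Sum>k1\<in>Idx d. \<Sum>k2\<in>Idx d. ?c k1 k2 k2 k1) = (\<Sum>k1\<in>Idx d. omega d (real_of_int (k1 * (x1 - y2)))) * (\<Sum>k2\<in>Idx d. omega d (real_of_int (k2 * (x2 - y1)))) / ?D"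
      by (simp add: sum_product sum_divide_distrib)
    then show ?thesis by (simp only: chs'[OF assms(1,2)])
  qed
  have C: "(\<Sum>k\<in>Idx d. ?c k k k k) = (of_nat d * dl d (x1 + x2 - y1 - y2)) / ?D"
  proof -
    have "?c k k k k = omega d (real_of_int (k * (x1 + x2 - y1 - y2))) / ?D" for k
      unfolding cf_def by (simp add: algebra_simps)
    then have "(\<Sum>k\<in>Idx d. ?c k k k k) = (\<Sum>k\<in>Idx d. omega d (real_of_int (k * (x1 + x2 - y1 - y2)))) / ?D"
      by (simp add: sum_divide_distrib)
    then show ?thesis by (simp only: chs'[OF assms(1,2)])
  qed
  show ?thesis unfolding G A B C using dz by (simp add: field_simps power4_eq_xxxx power3_eq_cube power2_eq_square)
qed

lemma Gtch_cong:
  assumes "\<And>a b. a \<in> Idx d \<times> Idx d \<Longrightarrow> b \<in> Idx d \<times> Idx d \<Longrightarrow> X a b = Y a b"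
  shows "Gtch d X r s = Gtch d Y r s"
proof -
  have "conj2 d U X r s = conj2 d U Y r s" for U
    unfolding conj2_def by (intro sum.cong refl) (simp add: assms)
  then show ?thesis unfolding Gtch_def twirl_def by simp
qed

lemma Gtch_zero: "Gtch d (\<lambda>_ _. 0) r s = 0"
  unfolding Gtch_def twirl_def conj2_def by simp

lemma Rch_eq:
  assumes "d > 0" "r \<in> Idx d \<times> Idx d" "s \<in> Idx d \<times> Idx d"
  shows "Rch d X r s = (if eqp r s then Gtch d (Gch d X) r s else 0)"
  unfolding Rch_def comp_def using Gch_eq[OF assms] by simp

lemma Rch_ketbra:
  assumes "d > 0" "p \<in> Idx d \<times> Idx d" "q \<in> Idx d \<times> Idx d" "eqp p q" "r \<in> Idx d \<times> Idx d" "s \<in> Idx d \<times> Idx d"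
  shows "Rch d (ketbra2 p q) r s = (if eqp r s then Gtch d (ketbra2 p q) r s else 0)"
proof -
  have "Gtch d (Gch d (ketbra2 p q)) r s = Gtch d (ketbra2 p q) r s"
    by (rule Gtch_cong) (use assms(1,4) in \<open>auto simp: Gch_eq ketbra2_def\<close>)
  then show ?thesis using Rch_eq[OF assms(1,5,6)] by simp
qed

lemma Rch_ketbra_ne:
  assumes "d > 0" "\<not> eqp p q" "r \<in> Idx d \<times> Idx d" "s \<in> Idx d \<times> Idx d"
  shows "Rch d (ketbra2 p q) r s = 0"
proof -
  have "Gtch d (Gch d (ketbra2 p q)) r s = Gtch d (\<lambda>_ _. 0) r s"
    by (rule Gtch_cong) (use assms(1,2) in \<open>auto simp: Gch_eq ketbra2_def\<close>)
  then show ?thesis using Rch_eq[OF assms(1,3,4)] by (simp add: Gtch_zero)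
qed

lemma idx_dvd:
  assumes "even d" "a \<in> Idx d" "b \<in> Idx d"
  shows "int d dvd (a - b) \<longleftrightarrow> a = b"
proof
  assume "int d dvd (a - b)"
  then obtain t where t: "a - b = int d * t" by (auto elim: dvdE)
  obtain k where k: "d = 2 * k" using assms(1) by (auto elim: evenE)
  have h: "int d div 2 = int k" using k by simp
  have "- int d < a - b" "a - b < int d" using assms(2,3) unfolding Idx_def h by (auto simp: k)
  then have dpos: "0 < int d" by linarith
  have "int d * (-1) < int d * t" "int d * t < int d * 1" using t \<open>- int d < a - b\<close> \<open>a - b < int d\<close> by auto
  then have "-1 < t" "t < 1" by (simp_all only: mult_less_cancel_left_pos[OF dpos])
  then have "t = 0" by simp
  then show "a = b" using t by simp
qed simp

lemma addm_in:
  assumes "even d" "d > 0"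
  shows "addm d a u \<in> Idx d"
proof -
  obtain k where k: "d = 2 * k" using assms(1) by (auto elim: evenE)
  have h: "int d div 2 = int k" using k by simp
  have "0 \<le> (a + u + int d div 2) mod int d" "(a + u + int d div 2) mod int d < int d"
    using assms by auto
  then show ?thesis unfolding addm_def Idx_def h by (simp add: k)
qed

lemma addm_dvd: "int d dvd (addm d a u - a - u)"
proof -
  have "addm d a u - a - u = (a + u + int d div 2) mod int d - (a + u + int d div 2)"
    unfolding addm_def by simp
  also have "int d dvd \<dots>" by (simp add: dvd_eq_mod_eq_0 mod_diff_left_eq)
  finally show ?thesis .
qed

lemma key_addm:
  assumes "even d" "d > 0" "y \<in> Idx d"
  shows "int d dvd (y - x - u) \<longleftrightarrow> y = addm d x u"
proof -
  have "y - x - u = (y - addm d x u) + (addm d x u - x - u)" by simp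
  then have "int d dvd (y - x - u) \<longleftrightarrow> int d dvd (y - addm d x u)"
    using addm_dvd[of d x u] by (metis dvd_add_left_iff)
  also have "\<dots> \<longleftrightarrow> y = addm d x u" by (rule idx_dvd[OF assms(1,3) addm_in[OF assms(1,2)]])
  finally show ?thesis .
qed

lemma dlI: "n = m \<Longrightarrow> dl d n = dl d m" by simp

lemma dl_idx: "even d \<Longrightarrow> a \<in> Idx d \<Longrightarrow> b \<in> Idx d \<Longrightarrow> dl d (a - b) = (if a = b then 1 else 0)"
  by (simp add: dl_def idx_dvd)

lemma sum_kb1: "(\<Sum>a\<in>Idx d. ketbra2 (a, addm d a u) (a, addm d a u) r s) =
   (if r = s \<and> fst r \<in> Idx d \<and> snd r = addm d (fst r) u then 1 else 0)"
proof -
  have "ketbra2 (a, addm d a u) (a, addm d a u) r s = (if a = fst r then (if r = s \<and> snd r = addm d (fst r) u then 1 else 0) else 0)" for a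
    by (cases r, cases s) (auto simp: ketbra2_def)
  then show ?thesis by auto
qed

lemma sum_kb2: "(\<Sum>a\<in>Idx d. ketbra2 (a, addm d a u) (addm d a u, a) r s) =
   (if fst s = snd r \<and> snd s = fst r \<and> fst r \<in> Idx d \<and> snd r = addm d (fst r) u then 1 else 0)"
proof -
  have "ketbra2 (a, addm d a u) (addm d a u, a) r s = (if a = fst r then (if fst s = snd r \<and> snd s = fst r \<and> snd r = addm d (fst r) u then 1 else 0) else 0)" for a
    by (cases r, cases s) (auto simp: ketbra2_def)
  then show ?thesis by auto
qed

lemma dl_via: "n - m = c \<Longrightarrow> int d dvd c \<Longrightarrow> dl d n = dl d m"
  unfolding dl_def by (metis diff_add_cancel dvd_add_left_iff dvd_add_right_iff)

lemma dl_0[simp]: "dl d 0 = 1" by (simp add: dl_def)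

lemma dl_neg: "dl d (- n) = dl d n" by (simp add: dl_def)

context
  fixes d :: nat and i u j :: int
  assumes ev: "even d" and d0: "d > 0" and iI: "i \<in> Idx d" and uI: "u \<in> Idx d" and u0: "u \<noteq> 0"
    and jdef: "j = addm d i u"
begin

lemma jI: "j \<in> Idx d" using addm_in[OF ev d0] jdef by simp
lemma ju: "int d dvd (j - i - u)" using addm_dvd jdef by simp

lemma zI: "0 \<in> Idx d"
proof -
  obtain k where k: "d = 2 * k" using ev by (auto elim: evenE)
  then have "k > 0" using d0 by simp
  then show ?thesis unfolding Idx_def using k by simp
qed

lemma dl_u: "dl d u = 0"
  using idx_dvd[OF ev uI zI] u0 by (simp add: dl_def)

lemma dl_ji: "dl d (j - i) = 0"
  using dl_via[of "j - i" u "j - i - u" d] ju dl_u by simp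

lemma dl_ij: "dl d (i - j) = 0"
  using dl_ji dl_neg[of d "j - i"] by simp

lemma dl_key: "y \<in> Idx d \<Longrightarrow> dl d (y - x - u) = (if y = addm d x u then 1 else 0)"
  using key_addm[OF ev d0] by (simp add: dl_def)

lemma addm_ne: "x \<in> Idx d \<Longrightarrow> addm d x u \<noteq> x"
proof
  assume "x \<in> Idx d" "addm d x u = x"
  then have "dl d (x - x - u) = 1" using dl_key[of x x] by simp
  then show False using dl_u dl_neg[of d u] by simp
qed

lemma dl_b1: "r2 \<in> Idx d \<Longrightarrow> dl d (r1 - i - (r2 - j)) = (if r2 = addm d r1 u then 1 else 0)"
proof -
  assume r2: "r2 \<in> Idx d"
  have "dl d (r1 - i - (r2 - j)) = dl d (- (r2 - r1 - u))"
    by (rule dl_via[where c = "j - i - u"]) (simp_all add: ju)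
  then show ?thesis by (simp only: dl_neg dl_key[OF r2])
qed

lemma dl_b2: "r2 \<in> Idx d \<Longrightarrow> dl d (r2 - j - (r1 - i)) = (if r2 = addm d r1 u then 1 else 0)"
proof -
  assume r2: "r2 \<in> Idx d"
  have "dl d (r2 - j - (r1 - i)) = dl d (r2 - r1 - u)"
    apply (rule dl_via[where c = "- (j - i - u)"])
     apply simp
    using ju by (simp only: dvd_minus_iff)
  then show ?thesis by (simp only: dl_key[OF r2])
qed

lemma dl_eqI: "a \<in> Idx d \<Longrightarrow> b \<in> Idx d \<Longrightarrow> n - (a - b) = 0 \<Longrightarrow> dl d n = (if a = b then 1 else 0)"
  using dl_via[of n "a - b" 0 d] dl_idx[OF ev] by simp




lemma case2:
  assumes rI: "r \<in> Idx d \<times> Idx d" and sI: "s \<in> Idx d \<times> Idx d"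
  shows "Rch d (ketbra2 (i, j) (i, j)) r s =
         (\<Sum>a\<in>Idx d. ketbra2 (a, addm d a u) (a, addm d a u) r s) / (of_nat d)^2
         + Iop r s / (of_nat d)^2 - (Iop r s + Fop r s - Eop r s) / (of_nat d)^3"
proof -
  obtain r1 r2 s1 s2 where rs: "r = (r1, r2)" "s = (s1, s2)" by (cases r, cases s) auto
  have I: "r1 \<in> Idx d" "r2 \<in> Idx d" "s1 \<in> Idx d" "s2 \<in> Idx d" using rI sI rs by auto
  have R: "Rch d (ketbra2 (i, j) (i, j)) r s = (if eqp r s then Gtch d (ketbra2 (i, j) (i, j)) r s else 0)"
    by (rule Rch_ketbra[OF d0 _ _ _ rI sI]) (use iI jI in \<open>auto simp: eqp_def\<close>)
  have G: "Gtch d (ketbra2 (i, j) (i, j)) (r1, r2) (s1, s2) =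
     (dl d (r1 - i - (s1 - i)) * dl d (r2 - j - (s2 - j)) + dl d (r1 - i - (s2 - j)) * dl d (r2 - j - (s1 - i))) / (of_nat d)^2
     - dl d (r1 - i + (r2 - j) - (s1 - i) - (s2 - j)) / (of_nat d)^3"
    using Gtch_val[OF ev d0, of "(i, j)" "(i, j)" "(r1, r2)" "(s1, s2)"] iI jI by simp
  have dz: "(of_nat d :: complex) \<noteq> 0" using d0 by simp
  have R': "Rch d (ketbra2 (i, j) (i, j)) (r1, r2) (s1, s2) = (if eqp (r1, r2) (s1, s2) then Gtch d (ketbra2 (i, j) (i, j)) (r1, r2) (s1, s2) else 0)"
    using R unfolding rs .
  show ?thesis
  proof (cases "eqp r s")
    case False
    have ne: "\<not> eqp (r1, r2) (s1, s2)" using False rs by simp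
    have z: "Iop (r1, r2) (s1, s2) = 0" "Fop (r1, r2) (s1, s2) = 0" "Eop (r1, r2) (s1, s2) = 0"
         "(\<Sum>a\<in>Idx d. ketbra2 (a, addm d a u) (a, addm d a u) (r1, r2) (s1, s2)) = 0"
      using ne unfolding Iop_def Fop_def Eop_def sum_kb1 eqp_def by auto
    show ?thesis unfolding rs R' using ne z by (simp only: if_False) simp
  next
    case True
    show ?thesis
    proof (cases "s1 = r1 \<and> s2 = r2")
      case True
      then have e: "s1 = r1" "s2 = r2" by auto
      have G': "Gtch d (ketbra2 (i, j) (i, j)) (r1, r2) (r1, r2) =
         (dl d (r1 - i - (r1 - i)) * dl d (r2 - j - (r2 - j)) + dl d (r1 - i - (r2 - j)) * dl d (r2 - j - (r1 - i))) / (of_nat d)^2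
         - dl d (r1 - i + (r2 - j) - (r1 - i) - (r2 - j)) / (of_nat d)^3"
        using G unfolding e .
      have f: "dl d (r1 - i - (r1 - i)) = 1" "dl d (r2 - j - (r2 - j)) = 1" "dl d (r1 - i + (r2 - j) - (r1 - i) - (r2 - j)) = 1"
        by simp_all
      show ?thesis unfolding rs R' unfolding e
        apply (simp add: G' f dl_b1[OF I(2)] dl_b2[OF I(2)] eqp_def sum_kb1 Iop_def Fop_def Eop_def I)
        done
    next
      case False
      then have e: "s1 = r2" "s2 = r1" "r1 \<noteq> r2" using True rs by (auto simp: eqp_def)
      have G': "Gtch d (ketbra2 (i, j) (i, j)) (r1, r2) (r2, r1) =
         (dl d (r1 - i - (r2 - i)) * dl d (r2 - j - (r1 - j)) + dl d (r1 - i - (r1 - j)) * dl d (r2 - j - (r2 - i))) / (of_nat d)^2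
         - dl d (r1 - i + (r2 - j) - (r2 - i) - (r1 - j)) / (of_nat d)^3"
        using G unfolding e(1,2) .
      have f1: "dl d (r1 - i - (r2 - i)) = 0" using dl_eqI[of r1 r2 "r1 - i - (r2 - i)"] I e(3) by simp
      have f2: "dl d (r1 - i - (r1 - j)) = 0" using dl_via[of "r1 - i - (r1 - j)" "j - i" 0 d] dl_ji by simp
      have f3: "dl d (r1 - i + (r2 - j) - (r2 - i) - (r1 - j)) = 1" using dl_via[of "r1 - i + (r2 - j) - (r2 - i) - (r1 - j)" 0 0 d] by simp
      show ?thesis unfolding rs R' unfolding e(1,2)
        apply (simp add: G' f1 f2 f3 eqp_def sum_kb1 Iop_def Fop_def Eop_def I e(3) dl_idx[OF ev I(1) I(2)] dl_ji)
        done
    qed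
  qed
qed

lemma case3:
  assumes rI: "r \<in> Idx d \<times> Idx d" and sI: "s \<in> Idx d \<times> Idx d"
  shows "Rch d (ketbra2 (i, j) (j, i)) r s =
         (\<Sum>a\<in>Idx d. ketbra2 (a, addm d a u) (addm d a u, a) r s) / (of_nat d)^2
         + Fop r s / (of_nat d)^2 - (Iop r s + Fop r s - Eop r s) / (of_nat d)^3"
proof -
  obtain r1 r2 s1 s2 where rs: "r = (r1, r2)" "s = (s1, s2)" by (cases r, cases s) auto
  have I: "r1 \<in> Idx d" "r2 \<in> Idx d" "s1 \<in> Idx d" "s2 \<in> Idx d" using rI sI rs by auto
  have R: "Rch d (ketbra2 (i, j) (j, i)) r s = (if eqp r s then Gtch d (ketbra2 (i, j) (j, i)) r s else 0)"
    by (rule Rch_ketbra[OF d0 _ _ _ rI sI]) (use iI jI in \<open>auto simp: eqp_def\<close>)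
  have G: "Gtch d (ketbra2 (i, j) (j, i)) (r1, r2) (s1, s2) =
     (dl d (r1 - i - (s1 - j)) * dl d (r2 - j - (s2 - i)) + dl d (r1 - i - (s2 - i)) * dl d (r2 - j - (s1 - j))) / (of_nat d)^2
     - dl d (r1 - i + (r2 - j) - (s1 - j) - (s2 - i)) / (of_nat d)^3"
    using Gtch_val[OF ev d0, of "(i, j)" "(j, i)" "(r1, r2)" "(s1, s2)"] iI jI by simp
  have R': "Rch d (ketbra2 (i, j) (j, i)) (r1, r2) (s1, s2) = (if eqp (r1, r2) (s1, s2) then Gtch d (ketbra2 (i, j) (j, i)) (r1, r2) (s1, s2) else 0)"
    using R unfolding rs .
  show ?thesis
  proof (cases "eqp r s")
    case False
    have ne: "\<not> eqp (r1, r2) (s1, s2)" using False rs by simp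
    have z: "Iop (r1, r2) (s1, s2) = 0" "Fop (r1, r2) (s1, s2) = 0" "Eop (r1, r2) (s1, s2) = 0"
         "(\<Sum>a\<in>Idx d. ketbra2 (a, addm d a u) (addm d a u, a) (r1, r2) (s1, s2)) = 0"
      using ne unfolding Iop_def Fop_def Eop_def sum_kb2 eqp_def by auto
    show ?thesis unfolding rs R' using ne z by (simp only: if_False) simp
  next
    case True
    show ?thesis
    proof (cases "s1 = r1 \<and> s2 = r2")
      case True
      then have e: "s1 = r1" "s2 = r2" by auto
      have G': "Gtch d (ketbra2 (i, j) (j, i)) (r1, r2) (r1, r2) =
         (dl d (r1 - i - (r1 - j)) * dl d (r2 - j - (r2 - i)) + dl d (r1 - i - (r2 - i)) * dl d (r2 - j - (r1 - j))) / (of_nat d)^2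
         - dl d (r1 - i + (r2 - j) - (r1 - j) - (r2 - i)) / (of_nat d)^3"
        using G unfolding e .
      have f2: "dl d (r1 - i - (r1 - j)) = 0" using dl_via[of "r1 - i - (r1 - j)" "j - i" 0 d] dl_ji by simp
      have f3: "dl d (r1 - i + (r2 - j) - (r1 - j) - (r2 - i)) = 1" using dl_via[of "r1 - i + (r2 - j) - (r1 - j) - (r2 - i)" 0 0 d] by simp
      have f4: "dl d (r1 - i - (r2 - i)) = (if r1 = r2 then 1 else 0)" using dl_eqI[of r1 r2 "r1 - i - (r2 - i)"] I by simp
      have f5: "dl d (r2 - j - (r1 - j)) = (if r2 = r1 then 1 else 0)" using dl_eqI[of r2 r1 "r2 - j - (r1 - j)"] I by simp
      have an: "addm d r1 u \<noteq> r1" by (rule addm_ne[OF I(1)])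
      show ?thesis unfolding rs R' unfolding e
        apply (simp add: G' f2 f3 f4 f5 eqp_def sum_kb2 Iop_def Fop_def Eop_def I dl_idx[OF ev I(1) I(2)] dl_idx[OF ev I(2) I(1)] dl_ji dl_ij)
        using an by auto
    next
      case False
      then have e: "s1 = r2" "s2 = r1" "r1 \<noteq> r2" using True rs by (auto simp: eqp_def)
      have G': "Gtch d (ketbra2 (i, j) (j, i)) (r1, r2) (r2, r1) =
         (dl d (r1 - i - (r2 - j)) * dl d (r2 - j - (r1 - i)) + dl d (r1 - i - (r1 - i)) * dl d (r2 - j - (r2 - j))) / (of_nat d)^2
         - dl d (r1 - i + (r2 - j) - (r2 - j) - (r1 - i)) / (of_nat d)^3"
        using G unfolding e(1,2) .
      have f3: "dl d (r1 - i + (r2 - j) - (r2 - j) - (r1 - i)) = 1" using dl_via[of "r1 - i + (r2 - j) - (r2 - j) - (r1 - i)" 0 0 d] by simp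
      show ?thesis unfolding rs R' unfolding e(1,2)
        apply (simp add: G' f3 dl_b1[OF I(2)] dl_b2[OF I(2)] eqp_def sum_kb2 Iop_def Fop_def Eop_def I e(3))
        done
    qed
  qed
qed

lemma case4:
  assumes rI: "r \<in> Idx d \<times> Idx d" and sI: "s \<in> Idx d \<times> Idx d"
  shows "Rch d (ketbra2 (i, i) (i, i)) r s =
         (Iop r s + Fop r s) / (of_nat d)^2 - (Iop r s + Fop r s - Eop r s) / (of_nat d)^3"
proof -
  obtain r1 r2 s1 s2 where rs: "r = (r1, r2)" "s = (s1, s2)" by (cases r, cases s) auto
  have I: "r1 \<in> Idx d" "r2 \<in> Idx d" "s1 \<in> Idx d" "s2 \<in> Idx d" using rI sI rs by auto
  have R: "Rch d (ketbra2 (i, i) (i, i)) r s = (if eqp r s then Gtch d (ketbra2 (i, i) (i, i)) r s else 0)"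
    by (rule Rch_ketbra[OF d0 _ _ _ rI sI]) (use iI in \<open>auto simp: eqp_def\<close>)
  have G: "Gtch d (ketbra2 (i, i) (i, i)) (r1, r2) (s1, s2) =
     (dl d (r1 - i - (s1 - i)) * dl d (r2 - i - (s2 - i)) + dl d (r1 - i - (s2 - i)) * dl d (r2 - i - (s1 - i))) / (of_nat d)^2
     - dl d (r1 - i + (r2 - i) - (s1 - i) - (s2 - i)) / (of_nat d)^3"
    using Gtch_val[OF ev d0, of "(i, i)" "(i, i)" "(r1, r2)" "(s1, s2)"] iI by simp
  have R': "Rch d (ketbra2 (i, i) (i, i)) (r1, r2) (s1, s2) = (if eqp (r1, r2) (s1, s2) then Gtch d (ketbra2 (i, i) (i, i)) (r1, r2) (s1, s2) else 0)"
    using R unfolding rs .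
  show ?thesis
  proof (cases "eqp r s")
    case False
    have ne: "\<not> eqp (r1, r2) (s1, s2)" using False rs by simp
    have z: "Iop (r1, r2) (s1, s2) = 0" "Fop (r1, r2) (s1, s2) = 0" "Eop (r1, r2) (s1, s2) = 0"
      using ne unfolding Iop_def Fop_def Eop_def eqp_def by auto
    show ?thesis unfolding rs R' using ne z by (simp only: if_False) simp
  next
    case True
    show ?thesis
    proof (cases "s1 = r1 \<and> s2 = r2")
      case True
      then have e: "s1 = r1" "s2 = r2" by auto
      have G': "Gtch d (ketbra2 (i, i) (i, i)) (r1, r2) (r1, r2) =
         (dl d (r1 - i - (r1 - i)) * dl d (r2 - i - (r2 - i)) + dl d (r1 - i - (r2 - i)) * dl d (r2 - i - (r1 - i))) / (of_nat d)^2
         - dl d (r1 - i + (r2 - i) - (r1 - i) - (r2 - i)) / (of_nat d)^3"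
        using G unfolding e .
      have f3: "dl d (r1 - i + (r2 - i) - (r1 - i) - (r2 - i)) = 1" using dl_via[of "r1 - i + (r2 - i) - (r1 - i) - (r2 - i)" 0 0 d] by simp
      have f4: "dl d (r1 - i - (r2 - i)) = (if r1 = r2 then 1 else 0)" using dl_eqI[of r1 r2 "r1 - i - (r2 - i)"] I by simp
      have f5: "dl d (r2 - i - (r1 - i)) = (if r2 = r1 then 1 else 0)" using dl_eqI[of r2 r1 "r2 - i - (r1 - i)"] I by simp
      show ?thesis unfolding rs R' unfolding e
        apply (simp add: G' f3 f4 f5 eqp_def Iop_def Fop_def Eop_def I dl_idx[OF ev I(1) I(2)] dl_idx[OF ev I(2) I(1)])
        done
    next
      case False
      then have e: "s1 = r2" "s2 = r1" "r1 \<noteq> r2" using True rs by (auto simp: eqp_def)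
      have G': "Gtch d (ketbra2 (i, i) (i, i)) (r1, r2) (r2, r1) =
         (dl d (r1 - i - (r2 - i)) * dl d (r2 - i - (r1 - i)) + dl d (r1 - i - (r1 - i)) * dl d (r2 - i - (r2 - i))) / (of_nat d)^2
         - dl d (r1 - i + (r2 - i) - (r2 - i) - (r1 - i)) / (of_nat d)^3"
        using G unfolding e(1,2) .
      have f3: "dl d (r1 - i + (r2 - i) - (r2 - i) - (r1 - i)) = 1" using dl_via[of "r1 - i + (r2 - i) - (r2 - i) - (r1 - i)" 0 0 d] by simp
      have f4: "dl d (r1 - i - (r2 - i)) = 0" using dl_eqI[of r1 r2 "r1 - i - (r2 - i)"] I e(3) by simp
      show ?thesis unfolding rs R' unfolding e(1,2)
        apply (simp add: G' f3 f4 eqp_def Iop_def Fop_def Eop_def I e(3) dl_idx[OF ev I(1) I(2)] dl_idx[OF ev I(2) I(1)])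
        done
    qed
  qed
qed

end

theorem lemma5:
  fixes d :: nat and i u :: int
  assumes "even d" and "d \<ge> 2"
    and "i \<in> Idx d" and "u \<in> Idx d" and "u \<noteq> 0"
  shows
   "(\<forall>i1\<in>Idx d. \<forall>j1\<in>Idx d. \<forall>i2\<in>Idx d. \<forall>j2\<in>Idx d. {i2, j2} \<noteq> {i1, j1} \<longrightarrow>
       (\<forall>r\<in>Idx d \<times> Idx d. \<forall>s\<in>Idx d \<times> Idx d. Rch d (ketbra2 (i1, j1) (i2, j2)) r s = 0))
  \<and> (\<forall>r\<in>Idx d \<times> Idx d. \<forall>s\<in>Idx d \<times> Idx d.
       Rch d (ketbra2 (i, addm d i u) (i, addm d i u)) r s =
         (\<Sum>a\<in>Idx d. ketbra2 (a, addm d a u) (a, addm d a u) r s) / (of_nat d)^2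
         + Iop r s / (of_nat d)^2 - (Iop r s + Fop r s - Eop r s) / (of_nat d)^3)
  \<and> (\<forall>r\<in>Idx d \<times> Idx d. \<forall>s\<in>Idx d \<times> Idx d.
       Rch d (ketbra2 (i, addm d i u) (addm d i u, i)) r s =
         (\<Sum>a\<in>Idx d. ketbra2 (a, addm d a u) (addm d a u, a) r s) / (of_nat d)^2
         + Fop r s / (of_nat d)^2 - (Iop r s + Fop r s - Eop r s) / (of_nat d)^3)
  \<and> (\<forall>r\<in>Idx d \<times> Idx d. \<forall>s\<in>Idx d \<times> Idx d.
       Rch d (ketbra2 (i, i) (i, i)) r s =
         (Iop r s + Fop r s) / (of_nat d)^2 - (Iop r s + Fop r s - Eop r s) / (of_nat d)^3)"
proof -
  have d0: "d > 0" using assms(2) by simp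
  note c2 = case2[OF assms(1) d0 assms(3,4,5) refl]
  note c3 = case3[OF assms(1) d0 assms(3,4,5) refl]
  note c4 = case4[OF assms(1) d0 assms(3,4,5) refl]
  have p1: "\<forall>i1\<in>Idx d. \<forall>j1\<in>Idx d. \<forall>i2\<in>Idx d. \<forall>j2\<in>Idx d. {i2, j2} \<noteq> {i1, j1} \<longrightarrow>
       (\<forall>r\<in>Idx d \<times> Idx d. \<forall>s\<in>Idx d \<times> Idx d. Rch d (ketbra2 (i1, j1) (i2, j2)) r s = 0)"
  proof (intro ballI impI)
    fix i1 j1 i2 j2 :: int and r s :: "int \<times> int"
    assume ne: "{i2, j2} \<noteq> {i1, j1}" and r: "r \<in> Idx d \<times> Idx d" and s: "s \<in> Idx d \<times> Idx d"
    have "\<not> eqp (i1, j1) (i2, j2)" using ne by (auto simp: eqp_def)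
    then show "Rch d (ketbra2 (i1, j1) (i2, j2)) r s = 0" by (rule Rch_ketbra_ne[OF d0 _ r s])
  qed
  show ?thesis
    apply (intro conjI)
       apply (rule p1)
      apply (intro ballI, rule c2, assumption+)
     apply (intro ballI, rule c3, assumption+)
    apply (intro ballI, rule c4, assumption+)
    done
qed

end
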